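(* Let $C_{\vec B}$ be a Cantor set with CDF $F_{\vec B}$. For every irrational $x\in[0,1]$, $x\in C_{\vec B}$ if and only if $F_{\vec B}(x)$ is irrational.
   Context: A Cantor set is specified by a binary digit vector $\vec B=(b_0,\dots,b_{N-1})\in\{0,1\}^N$ with $N\ge3$ and $2\le\|\vec B\|:=\sum_i b_i\le N-1$; its digit set is $D=\{i:b_i=1\}$. With $\phi_d(x)=(x+d)/N$ for $d\in D$, $C_{\vec B}\subset[0,1]$ is the unique nonempty compact set with $C_{\vec B}=\bigcup_{d\in D}\phi_d(C_{\vec B})$, and $\mu_{\vec B}$ is the unique Borel probability measure with $\mu_{\vec B}=\frac{1}{\|\vec B\|}\sum_{d\in D}\mu_{\vec B}\circ\phi_d^{-1}$. The CDF is $F_{\vec B}(x)=\mu_{\vec B}([0,x])$, $x\in[0,1]$. *)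

theory Defs
  imports "HOL-Probability.Probability"
begin

definition cantor_vec :: "nat list \<Rightarrow> bool" where
  "cantor_vec B \<longleftrightarrow> length B \<ge> 3 \<and> set B \<subseteq> {0,1} \<and> 2 \<le> sum_list B \<and> sum_list B \<le> length B - 1"

definition digits :: "nat list \<Rightarrow> nat set" where
  "digits B = {i. i < length B \<and> B ! i = 1}"

definition cphi :: "nat list \<Rightarrow> nat \<Rightarrow> real \<Rightarrow> real" where
  "cphi B d x = (x + real d) / real (length B)"

definition cantor_set :: "nat list \<Rightarrow> real set" where
  "cantor_set B = (THE C. C \<noteq> {} \<and> compact C \<and> C = (\<Union>d\<in>digits B. cphi B d ` C))"

definition cantor_measure :: "nat list \<Rightarrow> real measure" where
  "cantor_measure B = (THE \<mu>. prob_space \<mu> \<and> sets \<mu> = sets borel \<and>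
      (\<forall>A\<in>sets borel. measure \<mu> A =
          (\<Sum>d\<in>digits B. measure \<mu> (cphi B d -` A)) / real (sum_list B)))"

definition cantor_cdf :: "nat list \<Rightarrow> real \<Rightarrow> real" where
  "cantor_cdf B x = measure (cantor_measure B) {0..x}"

end

theory Submission
  imports Defs
begin



locale cantor_ctx =
  fixes B :: "nat list"
  assumes cv: "cantor_vec B"
begin

abbreviation "N \<equiv> length B"
abbreviation "m \<equiv> sum_list B"
abbreviation "D \<equiv> digits B"

lemma N_ge: "N \<ge> 3" using cv unfolding cantor_vec_def by auto

lemma D_sub: "D \<subseteq> {..<N}" unfolding digits_def by auto

lemma fin_D: "finite D" using D_sub finite_subset by blast

lemma card_D: "card D = m"
proof -
  have "m = (\<Sum>i<N. B ! i)" by (simp add: sum_list_sum_nth atLeast0LessThan)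
  also have "\<dots> = (\<Sum>i<N. if B ! i = 1 then 1 else 0)"
  proof (rule sum.cong)
    fix i assume "i \<in> {..<N}"
    then have "B ! i \<in> set B" by simp
    then have "B ! i \<in> {0,1}" using cv unfolding cantor_vec_def by blast
    then show "B ! i = (if B ! i = 1 then 1 else 0)" by auto
  qed simp
  also have "\<dots> = card D" by (simp add: sum.If_cases digits_def Collect_conj_eq lessThan_def Int_commute)
  finally show ?thesis by simp
qed

lemma m_ge: "m \<ge> 2" using cv unfolding cantor_vec_def by auto

lemma two_digits: "\<exists>a\<in>D. \<exists>b\<in>D. a < b"
proof -
  have "card D \<ge> 2" using card_D m_ge by simp
  then obtain a b where "a \<in> D" "b \<in> D" "a \<noteq> b"
    by (metis One_nat_def card.empty card_le_Suc0_iff_eq fin_D not_less_eq_eq numeral_2_eq_2 le_zero_eq card_0_eq zero_neq_numeral)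
  then show ?thesis by (metis linorder_neqE_nat)
qed

lemma D_pos: "\<exists>d\<in>D. d \<ge> 1"
proof -
  obtain a b where "a \<in> D" "b \<in> D" "a < b" using two_digits by blast
  then show ?thesis by (intro bexI[of _ b]) auto
qed

lemma D_small: "\<exists>d\<in>D. d + 2 \<le> N"
proof -
  obtain a b where "a \<in> D" "b \<in> D" "a < b" using two_digits by blast
  moreover have "b < N" using D_sub \<open>b \<in> D\<close> by auto
  ultimately show ?thesis by (intro bexI[of _ a]) auto
qed

lemma Bex_pos[simp]: "Bex (set B) ((<) 0)"
proof (rule ccontr)
  assume "\<not> Bex (set B) ((<) 0)"
  then have "\<forall>x\<in>set B. x = 0" by auto
  then have "m = 0" using sum_list_eq_0_iff[of B] by blast
  then show False using m_ge by linarith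
qed

lemma m_pos: "real m > 0" using m_ge by linarith

lemma cphi_eq: "cphi B d x = (x + real d) / real N" by (simp add: cphi_def)

lemma at_most_one:
  fixes h :: "real \<Rightarrow> real"
  assumes out: "\<And>y. \<not> (0 \<le> y \<and> y < 1) \<Longrightarrow> h y = 0"
    and bnd: "\<And>y. \<bar>h y\<bar> \<le> \<delta>"
  shows "(\<Sum>d\<in>D. \<bar>h (real N * x - real d)\<bar>) \<le> \<delta>"
proof -
  define A where "A = {d\<in>D. 0 \<le> real N * x - real d \<and> real N * x - real d < 1}"
  have finA: "finite A" using fin_D unfolding A_def by auto
  have "(\<Sum>d\<in>D. \<bar>h (real N * x - real d)\<bar>) = (\<Sum>d\<in>A. \<bar>h (real N * x - real d)\<bar>)"
    by (rule sum.mono_neutral_right) (use fin_D out in \<open>auto simp: A_def\<close>)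
  also have "\<dots> \<le> of_nat (card A) * \<delta>"
    by (rule sum_bounded_above) (use bnd in auto)
  also have "\<dots> \<le> \<delta>"
  proof -
    have d0: "\<delta> \<ge> 0" using bnd[of 0] by linarith
    have "\<forall>a\<in>A. \<forall>b\<in>A. a = b"
    proof (intro ballI)
      fix a b assume "a \<in> A" "b \<in> A"
      then have "\<lfloor>real N * x\<rfloor> = int a" "\<lfloor>real N * x\<rfloor> = int b"
        unfolding A_def by (auto intro!: floor_unique)
      then show "a = b" by simp
    qed
    then have "card A \<le> 1" using card_le_Suc0_iff_eq[OF finA] by simp
    then have "real (card A) \<le> 1" by simp
    then show ?thesis using mult_right_mono[OF _ d0, of "real (card A)" 1] by simp
  qed
  finally show ?thesis .
qed

definition T :: "(real \<Rightarrow> real) \<Rightarrow> real \<Rightarrow> real" where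
  "T g x = (\<Sum>d\<in>D. g (real N * x - real d)) / real m"

lemma T_bcontfun: "T (apply_bcontfun f) \<in> bcontfun"
proof -
  obtain M where M: "\<And>y. \<bar>apply_bcontfun f y\<bar> \<le> M"
    using bounded_apply_bcontfun[of f] unfolding bounded_iff by auto
  show ?thesis
  proof (rule bcontfun_normI)
    show "continuous_on UNIV (T (apply_bcontfun f))"
      unfolding T_def
      by (intro continuous_intros continuous_on_compose2[OF continuous_on_apply_bcontfun]) auto
    fix x
    have "\<bar>\<Sum>d\<in>D. apply_bcontfun f (real N * x - real d)\<bar> \<le> (\<Sum>d\<in>D. \<bar>apply_bcontfun f (real N * x - real d)\<bar>)"
      by (rule sum_abs)
    also have "\<dots> \<le> of_nat (card D) * M" by (rule sum_bounded_above) (use M in auto)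
    finally have "\<bar>\<Sum>d\<in>D. apply_bcontfun f (real N * x - real d)\<bar> \<le> real m * M"
      using card_D by simp
    then have "\<bar>\<Sum>d\<in>D. apply_bcontfun f (real N * x - real d)\<bar> / real m \<le> real m * M / real m"
      using m_pos by (intro divide_right_mono) auto
    then show "norm (T (apply_bcontfun f) x) \<le> real m * M / real m"
      unfolding T_def real_norm_def abs_divide abs_of_pos[OF m_pos] .
  qed
qed

definition TC :: "(real \<Rightarrow>\<^sub>C real) \<Rightarrow> (real \<Rightarrow>\<^sub>C real)" where
  "TC f = Bcontfun (T (apply_bcontfun f))"

lemma TC_apply: "apply_bcontfun (TC f) = T (apply_bcontfun f)"
  unfolding TC_def using T_bcontfun by (simp add: Bcontfun_inverse)

definition SF :: "(real \<Rightarrow>\<^sub>C real) set" where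
  "SF = {f. (\<forall>x\<le>0. apply_bcontfun f x = 0) \<and> (\<forall>x\<ge>1. apply_bcontfun f x = 1) \<and>
     (\<forall>x y. x \<le> y \<longrightarrow> apply_bcontfun f x \<le> apply_bcontfun f y)}"

lemma eval_cont: "continuous_on UNIV (\<lambda>f::real \<Rightarrow>\<^sub>C real. apply_bcontfun f x)"
  by (rule lipschitz_on_continuous_on[of 1]) (auto intro!: lipschitz_onI dist_bounded)

lemma SF_closed: "closed SF"
  unfolding SF_def
  by (intro closed_Collect_conj closed_Collect_all closed_Collect_imp open_Collect_const
      closed_Collect_eq closed_Collect_le eval_cont continuous_on_const)

lemma SF_ne: "SF \<noteq> {}"
proof -
  define g :: "real \<Rightarrow> real" where "g x = max 0 (min 1 x)" for x
  have "g \<in> bcontfun"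
    by (rule bcontfun_normI[where b=1]) (auto simp: g_def intro!: continuous_intros)
  then have "Bcontfun g \<in> SF" unfolding SF_def by (auto simp: Bcontfun_inverse g_def)
  then show ?thesis by auto
qed

lemma SF_D:
  assumes "f \<in> SF"
  shows "\<And>x. x \<le> 0 \<Longrightarrow> apply_bcontfun f x = 0" "\<And>x. x \<ge> 1 \<Longrightarrow> apply_bcontfun f x = 1"
    "\<And>x y. x \<le> y \<Longrightarrow> apply_bcontfun f x \<le> apply_bcontfun f y"
  using assms unfolding SF_def mem_Collect_eq by blast+

lemma TC_SF: "f \<in> SF \<Longrightarrow> TC f \<in> SF"
proof -
  assume f: "f \<in> SF"
  note f0 = SF_D(1)[OF f] and f1 = SF_D(2)[OF f] and fm = SF_D(3)[OF f]
  have A: "\<forall>x\<le>0. T (apply_bcontfun f) x = 0"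
  proof (intro allI impI)
    fix x :: real assume "x \<le> 0"
    then have "real N * x \<le> 0" by (simp add: mult_nonneg_nonpos)
    then have "\<And>d. real N * x - real d \<le> 0" by (smt (verit) of_nat_0_le_iff)
    then show "T (apply_bcontfun f) x = 0" unfolding T_def using f0 by simp
  qed
  have B: "\<forall>x\<ge>1. T (apply_bcontfun f) x = 1"
  proof (intro allI impI)
    fix x :: real assume x: "x \<ge> 1"
    have "\<And>d. d \<in> D \<Longrightarrow> real N * x - real d \<ge> 1"
    proof -
      fix d assume "d \<in> D"
      then have "d + 1 \<le> N" using D_sub by auto
      then have "real d + 1 \<le> real N" by linarith
      moreover have "real N * 1 \<le> real N * x" using x by (intro mult_left_mono) auto
      ultimately show "real N * x - real d \<ge> 1" by linarith
    qed
    then have "(\<Sum>d\<in>D. apply_bcontfun f (real N * x - real d)) = (\<Sum>d\<in>D. 1)"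
      using f1 by (intro sum.cong) auto
    also have "\<dots> = real m" using card_D by simp
    finally show "T (apply_bcontfun f) x = 1" unfolding T_def using m_pos by simp
  qed
  have C: "\<forall>x y. x \<le> y \<longrightarrow> T (apply_bcontfun f) x \<le> T (apply_bcontfun f) y"
  proof (intro allI impI)
    fix x y :: real assume "x \<le> y"
    then have "real N * x \<le> real N * y" by (intro mult_left_mono) auto
    then have le: "\<And>d. real N * x - real d \<le> real N * y - real d" by simp
    have "(\<Sum>d\<in>D. apply_bcontfun f (real N * x - real d)) \<le> (\<Sum>d\<in>D. apply_bcontfun f (real N * y - real d))"
      by (rule sum_mono) (rule fm[OF le])
    then show "T (apply_bcontfun f) x \<le> T (apply_bcontfun f) y" unfolding T_def
      using m_pos by (intro divide_right_mono) auto
  qed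
  show "TC f \<in> SF" unfolding SF_def mem_Collect_eq TC_apply using A B C by (intro conjI)
qed

lemma TC_contr:
  assumes f: "f \<in> SF" and g: "g \<in> SF"
  shows "dist (TC f) (TC g) \<le> (1 / real m) * dist f g"
proof (rule dist_bound)
  fix x
  define h where "h y = apply_bcontfun f y - apply_bcontfun g y" for y
  have out: "\<And>y. \<not> (0 \<le> y \<and> y < 1) \<Longrightarrow> h y = 0"
    using f g unfolding SF_def h_def by (auto simp: not_le)
  have bnd: "\<And>y. \<bar>h y\<bar> \<le> dist f g"
    unfolding h_def using dist_bounded[of f y g for y] by (simp add: dist_real_def)
  have "\<bar>T (apply_bcontfun f) x - T (apply_bcontfun g) x\<bar> = \<bar>\<Sum>d\<in>D. h (real N * x - real d)\<bar> / real m"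
    unfolding T_def h_def by (simp add: sum_subtractf diff_divide_distrib[symmetric])
  also have "\<dots> \<le> (\<Sum>d\<in>D. \<bar>h (real N * x - real d)\<bar>) / real m"
    by (intro divide_right_mono sum_abs) simp_all
  also have "\<dots> \<le> dist f g / real m"
    by (intro divide_right_mono at_most_one[OF out bnd]) simp_all
  finally show "dist (apply_bcontfun (TC f) x) (apply_bcontfun (TC g) x) \<le> (1 / real m) * dist f g"
    unfolding TC_apply dist_real_def by simp
qed

lemma fix_ex: "\<exists>!f\<in>SF. TC f = f"
proof (rule Banach_fix)
  show "Topological_Spaces.complete SF" using SF_closed complete_eq_closed by blast
  show "SF \<noteq> {}" by (rule SF_ne)
  show "0 \<le> 1 / real m" by simp
  show "1 / real m < 1" using m_ge by simp
  show "TC ` SF \<subseteq> SF" using TC_SF by blast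
  show "\<And>x y. x \<in> SF \<Longrightarrow> y \<in> SF \<Longrightarrow> dist (TC x) (TC y) \<le> 1 / real m * dist x y"
    by (rule TC_contr)
qed

definition F :: "real \<Rightarrow> real" where
  "F = apply_bcontfun (THE f. f \<in> SF \<and> TC f = f)"

lemma F_props: "F \<in> bcontfun" "\<And>x. x \<le> 0 \<Longrightarrow> F x = 0" "\<And>x. x \<ge> 1 \<Longrightarrow> F x = 1"
  "\<And>x y. x \<le> y \<Longrightarrow> F x \<le> F y" "\<And>x. T F x = F x"
proof -
  define f where "f = (THE f. f \<in> SF \<and> TC f = f)"
  have f: "f \<in> SF \<and> TC f = f" unfolding f_def
    using fix_ex theI'[of "\<lambda>f. f \<in> SF \<and> TC f = f"] by blast
  have Ff: "F = apply_bcontfun f" unfolding F_def f_def ..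
  show "F \<in> bcontfun" unfolding Ff using apply_bcontfun by blast
  show "\<And>x. x \<le> 0 \<Longrightarrow> F x = 0" "\<And>x. x \<ge> 1 \<Longrightarrow> F x = 1"
    "\<And>x y. x \<le> y \<Longrightarrow> F x \<le> F y" using f unfolding Ff SF_def by auto
  have "T (apply_bcontfun f) = apply_bcontfun (TC f)" by (simp add: TC_apply)
  also have "\<dots> = apply_bcontfun f" using f by simp
  finally show "\<And>x. T F x = F x" unfolding Ff by simp
qed

end


context cantor_ctx
begin

lemma N_pos: "real N > 0" using N_ge by linarith

lemma vimage_atMost: "cphi B d -` {..x} = {..real N * x - real d}"
  using N_pos by (auto simp: cphi_def field_simps)

lemma cphi_meas: "cphi B d \<in> borel_measurable borel"
  unfolding cphi_def by measurable

definition PM :: "real measure \<Rightarrow> bool" where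
  "PM \<mu> \<longleftrightarrow> prob_space \<mu> \<and> sets \<mu> = sets borel \<and>
      (\<forall>A\<in>sets borel. measure \<mu> A = (\<Sum>d\<in>D. measure \<mu> (cphi B d -` A)) / real m)"

lemma PM_rd: "PM \<mu> \<Longrightarrow> real_distribution \<mu>"
  unfolding PM_def real_distribution_def real_distribution_axioms_def by blast

lemma T_cdf:
  assumes "PM \<mu>"
  shows "T (cdf \<mu>) x = cdf \<mu> x"
  using assms unfolding PM_def T_def cdf_def2
  by (simp add: vimage_atMost)

lemma cdf_top:
  assumes P: "PM \<mu>" and x: "x \<ge> 1"
  shows "cdf \<mu> x = 1"
proof -
  interpret real_distribution \<mu> using PM_rd[OF P] .
  let ?G = "cdf \<mu>"
  have step: "?G y \<le> ?G (y + 1)" if "y \<ge> 1" for y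
    using cdf_nondecreasing by simp
  have step2: "?G (y + 1) \<le> ?G y" if y: "y \<ge> 1" for y
  proof -
    obtain d0 where d0: "d0 \<in> D" "d0 + 2 \<le> N" using D_small by blast
    have ge: "real N * y - real d \<ge> y" if "d \<in> D" for d
    proof -
      have "d + 1 \<le> N" using D_sub that by auto
      then have "real d \<le> real N - 1" by linarith
      moreover have "(real N - 1) * 1 \<le> (real N - 1) * y" using y N_ge by (intro mult_left_mono) auto
      ultimately show ?thesis by (simp add: algebra_simps)
    qed
    have ge0: "real N * y - real d0 \<ge> y + 1"
    proof -
      have "real d0 \<le> real N - 2" using d0 by linarith
      moreover have "(real N - 1) * 1 \<le> (real N - 1) * y" using y N_ge by (intro mult_left_mono) auto
      ultimately show ?thesis by (simp add: algebra_simps)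
    qed
    have "real m * ?G y = (\<Sum>d\<in>D. ?G (real N * y - real d))"
      using T_cdf[OF P, of y] m_pos unfolding T_def by (simp add: field_simps)
    also have "\<dots> = ?G (real N * y - real d0) + (\<Sum>d\<in>D - {d0}. ?G (real N * y - real d))"
      using fin_D d0 by (simp add: sum.remove)
    also have "\<dots> \<ge> ?G (y + 1) + (\<Sum>d\<in>D - {d0}. ?G y)"
      using ge0 ge by (intro add_mono sum_mono cdf_nondecreasing) auto
    finally have "real m * ?G y \<ge> ?G (y + 1) + real (card (D - {d0})) * ?G y" by simp
    moreover have "real (card (D - {d0})) = real m - 1" using card_D d0 fin_D m_ge
      by (simp add: of_nat_diff)
    ultimately show ?thesis by (simp add: algebra_simps)
  qed
  have eq: "?G (x + real n) = ?G x" for n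
  proof (induction n)
    case (Suc n)
    have "x + real n \<ge> 1" using x by simp
    then have "?G (x + real n + 1) = ?G (x + real n)"
      using step step2 by (meson antisym)
    moreover have "x + real (Suc n) = x + real n + 1" by simp
    ultimately show ?case using Suc by metis
  qed simp
  have "1 \<le> ?G x"
  proof (rule LIMSEQ_le_const2[OF cdf_lim_infty_prob])
    show "\<exists>N. \<forall>n\<ge>N. cdf \<mu> (real n) \<le> ?G x"
    proof (intro exI allI impI)
      fix n :: nat
      have "?G (real n) \<le> ?G (x + real n)" using x by (intro cdf_nondecreasing) simp
      then show "?G (real n) \<le> ?G x" using eq by simp
    qed
  qed
  then show ?thesis using cdf_bounded_prob[of x] by simp
qed

lemma cdf_bot:
  assumes P: "PM \<mu>" and x: "x < 0"
  shows "cdf \<mu> x = 0"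
proof -
  interpret real_distribution \<mu> using PM_rd[OF P] .
  let ?G = "cdf \<mu>"
  have step2: "?G y \<le> ?G (y - 1)" if y: "y < 0" for y
  proof -
    obtain d1 where d1: "d1 \<in> D" "d1 \<ge> 1" using D_pos by blast
    have le: "real N * y - real d \<le> y" for d
    proof -
      have "(real N - 1) * y \<le> (real N - 1) * 0" using y N_ge by (intro mult_left_mono) auto
      then show ?thesis by (simp add: algebra_simps)
    qed
    have "real d1 \<ge> 1" using d1 by simp
    then have le0: "real N * y - real d1 \<le> y - 1"
      using le[of 0] by simp
    have "real m * ?G y = (\<Sum>d\<in>D. ?G (real N * y - real d))"
      using T_cdf[OF P, of y] m_pos unfolding T_def by (simp add: field_simps)
    also have "\<dots> = ?G (real N * y - real d1) + (\<Sum>d\<in>D - {d1}. ?G (real N * y - real d))"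
      using fin_D d1 by (simp add: sum.remove)
    also have "\<dots> \<le> ?G (y - 1) + (\<Sum>d\<in>D - {d1}. ?G y)"
      using le0 le by (intro add_mono sum_mono cdf_nondecreasing) auto
    finally have "real m * ?G y \<le> ?G (y - 1) + real (card (D - {d1})) * ?G y" by simp
    moreover have "real (card (D - {d1})) = real m - 1" using card_D d1 fin_D m_ge
      by (simp add: of_nat_diff)
    ultimately show ?thesis by (simp add: algebra_simps)
  qed
  have eq: "?G (x - real n) = ?G x" for n
  proof (induction n)
    case (Suc n)
    have "x - real n < 0" using x by simp
    then have "?G (x - real n - 1) = ?G (x - real n)"
      using step2[of "x - real n"] cdf_nondecreasing[of "x - real n - 1" "x - real n"] by linarith
    moreover have "x - real (Suc n) = x - real n - 1" by simp
    ultimately show ?case using Suc by metis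
  qed simp
  have "?G x \<le> 0"
  proof (rule LIMSEQ_le_const[OF cdf_lim_neg_infty])
    show "\<exists>N. \<forall>n\<ge>N. ?G x \<le> cdf \<mu> (- real n)"
    proof (intro exI allI impI)
      fix n :: nat
      have "?G (x - real n) \<le> ?G (- real n)" using x by (intro cdf_nondecreasing) simp
      then show "?G x \<le> ?G (- real n)" using eq by simp
    qed
  qed
  then show ?thesis using cdf_nonneg[of x] by simp
qed

lemma cdf_eq_F:
  assumes P: "PM \<mu>"
  shows "cdf \<mu> = F"
proof
  fix x
  interpret real_distribution \<mu> using PM_rd[OF P] .
  define h where "h y = cdf \<mu> y - F y" for y
  have out: "\<And>y. \<not> (0 \<le> y \<and> y < 1) \<Longrightarrow> h y = 0"
    using cdf_top[OF P] cdf_bot[OF P] F_props(2,3) unfolding h_def by (auto simp: not_le not_less)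
  have Th: "h y = (\<Sum>d\<in>D. h (real N * y - real d)) / real m" for y
    using T_cdf[OF P, of y] F_props(5)[of y] unfolding h_def T_def
    by (simp add: sum_subtractf diff_divide_distrib)
  have F01: "0 \<le> F y \<and> F y \<le> 1" for y
    using F_props(2)[of y] F_props(3)[of y] F_props(4)[of 0 y] F_props(4)[of y 1] F_props(2)[of 0] F_props(3)[of 1]
    by (cases "y \<le> 0"; cases "y \<ge> 1") auto
  have bnd: "\<forall>y. \<bar>h y\<bar> \<le> (1 / real m) ^ n" for n
  proof (induction n)
    case 0
    show ?case using F01 cdf_nonneg cdf_bounded_prob unfolding h_def by (simp add: abs_le_iff) (smt (verit))
  next
    case (Suc n)
    show ?case
    proof
      fix y
      have "\<bar>h y\<bar> = \<bar>\<Sum>d\<in>D. h (real N * y - real d)\<bar> / real m"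
        using Th[of y] m_pos by simp
      also have "\<dots> \<le> (\<Sum>d\<in>D. \<bar>h (real N * y - real d)\<bar>) / real m"
        using m_pos by (intro divide_right_mono sum_abs) auto
      also have "\<dots> \<le> (1 / real m) ^ n / real m"
        using m_pos by (intro divide_right_mono at_most_one[OF out]) (use Suc in auto)
      finally show "\<bar>h y\<bar> \<le> (1 / real m) ^ Suc n" by (simp add: field_simps)
    qed
  qed
  have "\<bar>h x\<bar> \<le> 0"
  proof (rule LIMSEQ_le_const[OF LIMSEQ_power_zero[of "1 / real m"]])
    show "norm (1 / real m) < 1" using m_ge by simp
    show "\<exists>N. \<forall>n\<ge>N. \<bar>h x\<bar> \<le> (1 / real m) ^ n" using bnd by blast
  qed
  then show "cdf \<mu> x = F x" unfolding h_def by simp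
qed

end


context cantor_ctx
begin

definition mu0 :: "real measure" where "mu0 = interval_measure F"

lemma F_cont: "continuous_on UNIV F"
  using F_props(1) unfolding bcontfun_def by simp

lemma F_rc: "continuous (at_right a) F"
proof -
  have "isCont F a" using F_cont by (simp add: continuous_on_eq_continuous_at)
  then show ?thesis by (rule continuous_at_imp_continuous_at_within)
qed

lemma F_bot: "(F \<longlongrightarrow> 0) at_bot"
proof (rule tendsto_eventually)
  show "\<forall>\<^sub>F x in at_bot. F x = 0"
    unfolding eventually_at_bot_linorder using F_props(2) by blast
qed

lemma F_top: "(F \<longlongrightarrow> 1) at_top"
proof (rule tendsto_eventually)
  show "\<forall>\<^sub>F x in at_top. F x = 1"
    unfolding eventually_at_top_linorder using F_props(3) by blast
qed

lemma rd_mu0: "real_distribution mu0"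
  unfolding mu0_def by (rule real_distribution_interval_measure[OF F_props(4) F_rc F_bot F_top])

lemma cdf_mu0: "cdf mu0 = F"
  unfolding mu0_def by (rule cdf_interval_measure[OF F_props(4) F_rc F_bot])

lemma mu0_atMost: "measure mu0 {..y} = F y"
  using fun_cong[OF cdf_mu0, of y] by (simp add: cdf_def)

lemma sets_borel_eq: "sets borel = sigma_sets UNIV (range (\<lambda>a::real. {..a}))"
  unfolding borel_eq_atMost by (rule sets_measure_of) simp

lemma vimage_borel: "A \<in> sets borel \<Longrightarrow> cphi B d -` A \<in> sets borel"
  by (rule measurable_sets_borel[OF cphi_meas]) simp

lemma PM_mu0: "PM mu0"
proof -
  interpret real_distribution mu0 by (rule rd_mu0)
  have "\<forall>A\<in>sets borel. measure mu0 A = (\<Sum>d\<in>D. measure mu0 (cphi B d -` A)) / real m"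
  proof
    fix A :: "real set" assume "A \<in> sets borel"
    then have Asig: "A \<in> sigma_sets UNIV (range (\<lambda>a. {..a}))" using sets_borel_eq by simp
    have ist: "Int_stable (range (\<lambda>a::real. {..a}))" unfolding Int_stable_def by auto
    have cls: "range (\<lambda>a::real. {..a}) \<subseteq> Pow UNIV" by simp
    from ist cls Asig show "measure mu0 A = (\<Sum>d\<in>D. measure mu0 (cphi B d -` A)) / real m"
    proof (induct rule: sigma_sets_induct_disjoint)
      case (basic A)
      then obtain a where a: "A = {..a}" by auto
      have "measure mu0 A = F a" unfolding a by (rule mu0_atMost)
      also have "\<dots> = T F a" using F_props(5) by simp
      also have "\<dots> = (\<Sum>d\<in>D. measure mu0 (cphi B d -` A)) / real m"
        unfolding T_def a vimage_atMost mu0_atMost ..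
      finally show ?case .
    next
      case empty
      show ?case by simp
    next
      case (compl A)
      then have Ab: "A \<in> sets borel" using sets_borel_eq by simp
      have "measure mu0 (UNIV - A) = 1 - measure mu0 A"
        using prob_compl[of A] Ab by simp
      also have "\<dots> = (real m - (\<Sum>d\<in>D. measure mu0 (cphi B d -` A))) / real m"
        using compl(2) m_pos by (simp add: field_simps)
      also have "\<dots> = (\<Sum>d\<in>D. 1 - measure mu0 (cphi B d -` A)) / real m"
        using card_D by (simp add: sum_subtractf)
      also have "\<dots> = (\<Sum>d\<in>D. measure mu0 (cphi B d -` (UNIV - A))) / real m"
      proof -
        have "\<And>d. measure mu0 (cphi B d -` (UNIV - A)) = 1 - measure mu0 (cphi B d -` A)"
          using prob_compl vimage_borel[OF Ab] by (simp add: vimage_Diff)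
        then show ?thesis by simp
      qed
      finally show ?case .
    next
      case (union A)
      then have Ab: "\<And>i. A i \<in> sets borel" using sets_borel_eq by auto
      have s1: "(\<lambda>i. measure mu0 (A i)) sums measure mu0 (\<Union>i. A i)"
        using Ab union(1) by (intro finite_measure_UNION) auto
      have s2: "(\<lambda>i. measure mu0 (cphi B d -` A i)) sums measure mu0 (cphi B d -` (\<Union>i. A i))" for d
      proof -
        have "disjoint_family (\<lambda>i. cphi B d -` A i)"
          using union(1) unfolding disjoint_family_on_def by auto
        then have "(\<lambda>i. measure mu0 (cphi B d -` A i)) sums measure mu0 (\<Union>i. cphi B d -` A i)"
          using vimage_borel[OF Ab] by (intro finite_measure_UNION) auto
        then show ?thesis by (simp add: vimage_UN)
      qed
      have "(\<lambda>i. (\<Sum>d\<in>D. measure mu0 (cphi B d -` A i)) / real m) sums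
          ((\<Sum>d\<in>D. measure mu0 (cphi B d -` (\<Union>i. A i))) / real m)"
        by (intro sums_divide sums_sum s2)
      then have "(\<lambda>i. measure mu0 (A i)) sums ((\<Sum>d\<in>D. measure mu0 (cphi B d -` (\<Union>i. A i))) / real m)"
        using union(3) by simp
      then show ?case using s1 sums_unique2 by blast
    qed
  qed
  then show ?thesis unfolding PM_def using prob_space_axioms by simp
qed

lemma cantor_measure_eq: "cantor_measure B = mu0"
proof -
  have "cantor_measure B = (THE \<mu>. PM \<mu>)" unfolding cantor_measure_def PM_def ..
  also have "\<dots> = mu0"
  proof (rule the_equality)
    show "PM mu0" by (rule PM_mu0)
    fix \<mu> assume "PM \<mu>"
    then show "\<mu> = mu0" using cdf_unique[OF PM_rd[OF \<open>PM \<mu>\<close>] rd_mu0] cdf_eq_F cdf_mu0 by simp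
  qed
  finally show ?thesis .
qed

lemma cantor_cdf_eq: "x \<ge> 0 \<Longrightarrow> cantor_cdf B x = F x"
proof -
  assume x: "x \<ge> 0"
  interpret real_distribution mu0 by (rule rd_mu0)
  have "measure mu0 {..x} = measure mu0 ({..<0} \<union> {0..x})"
    using x by (intro arg_cong[where f="measure mu0"]) auto
  also have "\<dots> = measure mu0 {..<0} + measure mu0 {0..x}"
    by (intro finite_measure_Union) auto
  finally have e: "measure mu0 {..x} = measure mu0 {..<0} + measure mu0 {0..x}" .
  have "measure mu0 {..<0} \<le> measure mu0 {..0}"
    by (intro finite_measure_mono) auto
  also have "\<dots> = cdf mu0 0" by (simp add: cdf_def)
  also have "\<dots> = 0" using cdf_mu0 F_props(2)[of 0] by simp
  finally have "measure mu0 {..<0} = 0" using measure_nonneg[of mu0 "{..<0}"] by linarith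
  then show ?thesis using e mu0_atMost[of x] unfolding cantor_cdf_def cantor_measure_eq
    by simp
qed

end


context cantor_ctx
begin

lemma B_ne[simp]: "B \<noteq> []" using N_ge by auto

primrec E :: "nat \<Rightarrow> real set" where
  "E 0 = {0..1}"
| "E (Suc n) = (\<Union>d\<in>D. cphi B d ` E n)"

definition C0 :: "real set" where "C0 = (\<Inter>n. E n)"

lemma cphi_inv: "cphi B d z = y \<longleftrightarrow> z = real N * y - real d"
  using N_pos by (auto simp: cphi_def field_simps)

lemma cphi_inv2: "y = cphi B d z \<longleftrightarrow> z = real N * y - real d"
  using cphi_inv by metis

lemma mem_img: "y \<in> cphi B d ` S \<longleftrightarrow> real N * y - real d \<in> S"
  unfolding image_iff cphi_inv2 by auto

lemma mem_E_Suc: "y \<in> E (Suc n) \<longleftrightarrow> (\<exists>d\<in>D. real N * y - real d \<in> E n)"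
  by (simp add: mem_img)

lemma cphi_01: assumes "y \<in> {0..1}" "d \<in> D" shows "cphi B d y \<in> {0..1}"
proof -
  have "d + 1 \<le> N" using assms(2) D_sub by auto
  then have "real d + 1 \<le> real N" by linarith
  then show ?thesis using assms(1) N_pos by (auto simp: cphi_def field_simps)
qed

lemma E_dec: "E (Suc n) \<subseteq> E n"
proof (induction n)
  case 0
  show ?case using cphi_01 by auto
next
  case (Suc n)
  then show ?case by (simp only: E.simps) blast
qed

lemma E_mono: "n \<le> n' \<Longrightarrow> E n' \<subseteq> E n"
  by (rule lift_Suc_antimono_le[of E]) (rule E_dec)

lemma E_compact: "compact (E n)"
proof (induction n)
  case 0
  then show ?case by simp
next
  case (Suc n)
  have "compact (cphi B d ` E n)" for d
    by (rule compact_continuous_image[OF _ Suc]) (auto simp: cphi_def intro!: continuous_intros)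
  then show ?case using fin_D by auto
qed

lemma D_ne: "D \<noteq> {}" using two_digits by auto

lemma E_ne: "E n \<noteq> {}"
proof (induction n)
  case 0
  show ?case by simp
next
  case (Suc n)
  obtain d where d: "d \<in> D" using D_ne by blast
  obtain z where z: "z \<in> E n" using Suc by blast
  have "cphi B d z \<in> E (Suc n)" using d z by auto
  then show ?case by blast
qed

lemma C0_ne: "C0 \<noteq> {}"
  unfolding C0_def by (rule compact_nest[OF E_compact E_ne E_mono])

lemma C0_compact: "compact C0"
proof -
  have "C0 = (\<Inter>n. E n) \<inter> E 0" unfolding C0_def by blast
  moreover have "closed (\<Inter>n. E n)" using E_compact by (intro closed_INT) (auto intro: compact_imp_closed)
  ultimately show ?thesis using E_compact[of 0] by (metis closed_Int_compact)
qed

lemma C0_sub: "C0 \<subseteq> {0..1}"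
proof -
  have "C0 \<subseteq> E 0" unfolding C0_def by blast
  then show ?thesis by simp
qed

lemma C0_fix: "C0 = (\<Union>d\<in>D. cphi B d ` C0)"
proof
  show "C0 \<subseteq> (\<Union>d\<in>D. cphi B d ` C0)"
  proof
    fix y assume y: "y \<in> C0"
    define S where "S d = {n. real N * y - real d \<in> E n}" for d
    have "(\<Union>d\<in>D. S d) = UNIV"
    proof -
      have "n \<in> (\<Union>d\<in>D. S d)" for n
      proof -
        have "y \<in> E (Suc n)" using y unfolding C0_def by blast
        then obtain d where "d \<in> D" "real N * y - real d \<in> E n" unfolding mem_E_Suc by blast
        then show ?thesis unfolding S_def by blast
      qed
      then show ?thesis by auto
    qed
    then have "\<not> finite (\<Union>d\<in>D. S d)" by simp
    then obtain d where d: "d \<in> D" "infinite (S d)" using fin_D by blast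
    have "real N * y - real d \<in> E n" for n
    proof -
      obtain n' where "n' \<ge> n" "n' \<in> S d" using d(2) unfolding infinite_nat_iff_unbounded_le by blast
      then show ?thesis using E_mono unfolding S_def by blast
    qed
    then have "real N * y - real d \<in> C0" unfolding C0_def by auto
    then show "y \<in> (\<Union>d\<in>D. cphi B d ` C0)" using d(1) by (auto simp: mem_img)
  qed
next
  show "(\<Union>d\<in>D. cphi B d ` C0) \<subseteq> C0"
  proof
    fix y assume "y \<in> (\<Union>d\<in>D. cphi B d ` C0)"
    then obtain d where d: "d \<in> D" "real N * y - real d \<in> C0" by (auto simp: mem_img)
    have "y \<in> E n" for n
    proof -
      have "y \<in> E (Suc n)" using d unfolding C0_def mem_E_Suc by auto
      then show ?thesis using E_dec by auto
    qed
    then show "y \<in> C0" unfolding C0_def by auto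
  qed
qed

lemma approx:
  assumes K1: "K1 \<subseteq> (\<Union>d\<in>D. cphi B d ` K1)" and K2: "\<And>d. d \<in> D \<Longrightarrow> cphi B d ` K2 \<subseteq> K2"
    and z0: "z0 \<in> K2" and R: "\<And>a. a \<in> K1 \<Longrightarrow> \<bar>a - z0\<bar> \<le> R"
  shows "y \<in> K1 \<Longrightarrow> \<exists>z\<in>K2. \<bar>y - z\<bar> \<le> R / real N ^ n"
proof (induction n arbitrary: y)
  case 0
  then show ?case using z0 R by auto
next
  case (Suc n)
  then obtain d y' where d: "d \<in> D" "y' \<in> K1" "y = cphi B d y'" using K1 by blast
  obtain z' where z': "z' \<in> K2" "\<bar>y' - z'\<bar> \<le> R / real N ^ n" using Suc.IH[OF d(2)] by blast
  have mem: "cphi B d z' \<in> K2" using K2[OF d(1)] z'(1) by blast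
  have e1: "\<bar>y - cphi B d z'\<bar> = \<bar>y' - z'\<bar> / real N"
  proof -
    have "y - cphi B d z' = (y' - z') / real N" unfolding d(3) cphi_def using N_pos by (simp add: field_simps)
    then show ?thesis using N_pos by (simp add: abs_divide)
  qed
  have e2: "\<bar>y' - z'\<bar> / real N \<le> R / real N ^ n / real N"
    using z'(2) N_pos by (intro divide_right_mono) auto
  have e3: "R / real N ^ n / real N = R / real N ^ Suc n"
    by (simp add: divide_divide_eq_left mult.commute)
  have "\<bar>y - cphi B d z'\<bar> \<le> R / real N ^ Suc n" using e1 e2 e3 by (metis order.trans order.refl)
  then show ?case using mem by blast
qed

lemma approx_sub:
  assumes K1: "K1 \<subseteq> (\<Union>d\<in>D. cphi B d ` K1)" and K2: "\<And>d. d \<in> D \<Longrightarrow> cphi B d ` K2 \<subseteq> K2"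
    and ne: "K2 \<noteq> {}" and cl: "closed K2" and bd: "bounded K1"
  shows "K1 \<subseteq> K2"
proof
  fix y assume y: "y \<in> K1"
  obtain z0 where z0: "z0 \<in> K2" using ne by blast
  obtain R where R: "\<And>a. a \<in> K1 \<Longrightarrow> dist z0 a \<le> R" using bd unfolding bounded_any_center[of _ z0] by blast
  have R': "\<And>a. a \<in> K1 \<Longrightarrow> \<bar>a - z0\<bar> \<le> R" using R by (simp add: dist_real_def abs_minus_commute)
  have R0: "R \<ge> 0" using R'[OF y] by linarith
  have "\<forall>e>0. \<exists>z\<in>K2. dist z y < e"
  proof (intro allI impI)
    fix e :: real assume e: "e > 0"
    have "real N > 1" using N_ge by linarith
    then have "1 / real N < 1" by (auto simp: divide_less_eq)
    moreover have "e / (R + 1) > 0" using e R0 by simp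
    ultimately obtain n where n: "(1 / real N) ^ n < e / (R + 1)" using real_arch_pow_inv by blast
    obtain z where z: "z \<in> K2" "\<bar>y - z\<bar> \<le> R / real N ^ n" using approx[OF K1 K2 z0 R' y] by blast
    have "R / real N ^ n = R * (1 / real N) ^ n" by (simp add: power_one_over)
    also have "\<dots> \<le> (R + 1) * (1 / real N) ^ n" by (intro mult_right_mono) auto
    also have "\<dots> < (R + 1) * (e / (R + 1))" using n R0 by (intro mult_strict_left_mono) auto
    also have "\<dots> = e" using R0 by simp
    finally show "\<exists>z\<in>K2. dist z y < e" using z by (intro bexI[of _ z]) (auto simp: dist_real_def abs_minus_commute)
  qed
  then show "y \<in> K2" using cl closed_approachable by blast
qed

lemma cantor_set_eq: "cantor_set B = C0"
  unfolding cantor_set_def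
proof (rule the_equality)
  show "C0 \<noteq> {} \<and> compact C0 \<and> C0 = (\<Union>d\<in>D. cphi B d ` C0)"
    using C0_ne C0_compact C0_fix by blast
  fix K assume K: "K \<noteq> {} \<and> compact K \<and> K = (\<Union>d\<in>D. cphi B d ` K)"
  have "K \<subseteq> C0"
    by (rule approx_sub) (use K C0_ne C0_compact C0_fix in \<open>auto intro: compact_imp_closed compact_imp_bounded\<close>)
  moreover have "C0 \<subseteq> K"
    by (rule approx_sub) (use K C0_ne C0_compact C0_fix in \<open>auto intro: compact_imp_closed compact_imp_bounded\<close>)
  ultimately show "K = C0" by blast
qed

end


context cantor_ctx
begin

definition sig :: "real \<Rightarrow> real" where "sig y = real N * y - of_int \<lfloor>real N * y\<rfloor>"
definition dig :: "real \<Rightarrow> nat" where "dig y = nat \<lfloor>real N * y\<rfloor>"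
definition orb :: "real \<Rightarrow> nat \<Rightarrow> real" where "orb x k = (sig ^^ k) x"
definition r :: "nat \<Rightarrow> nat" where "r a = card {d\<in>D. d < a}"

lemma orb_0[simp]: "orb x 0 = x" by (simp add: orb_def)
lemma orb_Suc[simp]: "orb x (Suc k) = sig (orb x k)" by (simp add: orb_def)
lemma orb_sig: "orb (sig y) k = orb y (Suc k)" by (simp add: orb_def funpow_Suc_right del: funpow.simps)

lemma dig_bounds:
  assumes "y \<ge> 0"
  shows "real (dig y) \<le> real N * y" "real N * y < real (dig y) + 1"
    "of_int \<lfloor>real N * y\<rfloor> = real (dig y)"
proof -
  have "\<lfloor>real N * y\<rfloor> \<ge> 0" using assms by simp
  then show e: "of_int \<lfloor>real N * y\<rfloor> = real (dig y)" unfolding dig_def by simp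
  show "real (dig y) \<le> real N * y" using e of_int_floor_le[of "real N * y"] by simp
  show "real N * y < real (dig y) + 1" using e real_of_int_floor_add_one_gt[of "real N * y"] by simp
qed

lemma sig_eq: "y \<ge> 0 \<Longrightarrow> sig y = real N * y - real (dig y)"
  using dig_bounds(3) unfolding sig_def by simp

lemma sig_range: "0 \<le> sig y \<and> sig y < 1"
  unfolding sig_def using of_int_floor_le[of "real N * y"] real_of_int_floor_add_one_gt[of "real N * y"] by linarith

lemma dig_lt: assumes "0 \<le> y" "y < 1" shows "dig y < N"
proof -
  have "real N * y < real N * 1" using assms N_pos by (intro mult_strict_left_mono) auto
  then have "real (dig y) < real N" using dig_bounds(1)[OF assms(1)] by linarith
  then show ?thesis by simp
qed

lemma sig_irr: assumes "y \<notin> \<rat>" shows "sig y \<notin> \<rat>"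
proof
  assume "sig y \<in> \<rat>"
  then have "(sig y + of_int \<lfloor>real N * y\<rfloor>) / real N \<in> \<rat>" by (intro Rats_divide Rats_add) auto
  moreover have "(sig y + of_int \<lfloor>real N * y\<rfloor>) / real N = y" unfolding sig_def using N_pos by simp
  ultimately show False using assms by simp
qed

lemma orb_props: assumes "x \<notin> \<rat>" "0 \<le> x" "x < 1"
  shows "orb x k \<notin> \<rat> \<and> 0 \<le> orb x k \<and> orb x k < 1"
  using assms by (induction k) (auto simp: sig_irr sig_range)

lemma F01: "0 \<le> F y \<and> F y \<le> 1"
  using F_props(2)[of y] F_props(3)[of y] F_props(4)[of 0 y] F_props(4)[of y 1] F_props(2)[of 0] F_props(3)[of 1]
  by (cases "y \<le> 0"; cases "y \<ge> 1") auto

lemma F_step: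
  assumes y: "0 \<le> y" "y < 1"
  shows "real m * F y = real (r (dig y)) + (if dig y \<in> D then F (sig y) else 0)"
proof -
  let ?a = "dig y"
  note b = dig_bounds[OF y(1)]
  have "real m * F y = (\<Sum>d\<in>D. F (real N * y - real d))"
    using F_props(5)[of y] m_pos unfolding T_def by (simp add: field_simps)
  also have "\<dots> = (\<Sum>d\<in>D. (if d < ?a then 1 else 0) + (if d = ?a then F (sig y) else 0))"
  proof (rule sum.cong)
    fix d assume "d \<in> D"
    show "F (real N * y - real d) = (if d < ?a then 1 else 0) + (if d = ?a then F (sig y) else 0)"
    proof (cases "d < ?a")
      case True
      then have "real d + 1 \<le> real ?a" by linarith
      then have "real N * y - real d \<ge> 1" using b by linarith
      then show ?thesis using True F_props(3) by simp
    next
      case False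
      show ?thesis
      proof (cases "d = ?a")
        case True
        then show ?thesis using sig_eq[OF y(1)] by simp
      next
        case False2: False
        then have "real ?a + 1 \<le> real d" using False by linarith
        then have "real N * y - real d \<le> 0" using b by linarith
        then show ?thesis using False False2 F_props(2) by simp
      qed
    qed
  qed simp
  also have "\<dots> = (\<Sum>d\<in>D. (if d < ?a then 1 else 0)) + (\<Sum>d\<in>D. (if d = ?a then F (sig y) else 0))"
    by (rule sum.distrib)
  also have "(\<Sum>d\<in>D. (if d < ?a then 1 else 0)) = (\<Sum>d\<in>{d\<in>D. d < ?a}. (1::real))"
    using sum.inter_filter[OF fin_D, of "\<lambda>_. (1::real)" "\<lambda>d. d < ?a"] by simp
  also have "\<dots> = real (r ?a)" unfolding r_def by simp
  also have "(\<Sum>d\<in>D. (if d = ?a then F (sig y) else 0)) = (if ?a \<in> D then F (sig y) else 0)"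
    using fin_D by (simp add: sum.delta)
  finally show ?thesis .
qed

lemma r_le: "a \<in> D \<Longrightarrow> r a + 1 \<le> m"
proof -
  assume a: "a \<in> D"
  have "{d\<in>D. d < a} \<subseteq> D - {a}" by auto
  then have "r a \<le> card (D - {a})" unfolding r_def using fin_D by (intro card_mono) auto
  also have "\<dots> = m - 1" using a card_D fin_D by simp
  finally show ?thesis using m_ge by linarith
qed

lemma r_strict: "a \<in> D \<Longrightarrow> a < b \<Longrightarrow> r a < r b"
proof -
  assume a: "a \<in> D" "a < b"
  have "{d\<in>D. d < a} \<subset> {d\<in>D. d < b}" using a by auto
  then show ?thesis unfolding r_def using fin_D by (intro psubset_card_mono) auto
qed

lemma r_inj: "a \<in> D \<Longrightarrow> b \<in> D \<Longrightarrow> r a = r b \<Longrightarrow> a = b"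
  using r_strict by (metis less_irrefl linorder_neqE_nat)

end


context cantor_ctx
begin

lemma CM1:
  assumes y: "y \<in> C0" "y \<notin> \<rat>"
  shows "dig y \<in> D \<and> sig y \<in> C0"
proof -
  have "y \<in> (\<Union>d\<in>D. cphi B d ` C0)" using y C0_fix by blast
  then obtain d where d: "d \<in> D" "real N * y - real d \<in> C0" by (auto simp: mem_img)
  define z where "z = real N * y - real d"
  have z01: "0 \<le> z \<and> z \<le> 1" using d(2) C0_sub unfolding z_def by auto
  have zq: "z \<notin> \<rat>"
  proof
    assume "z \<in> \<rat>"
    then have "(z + real d) / real N \<in> \<rat>" by (intro Rats_divide Rats_add) auto
    moreover have "(z + real d) / real N = y" unfolding z_def using N_pos by simp
    ultimately show False using y(2) by simp
  qed
  have "z \<noteq> 1" using zq by auto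
  then have "z < 1" using z01 by simp
  then have "\<lfloor>real N * y\<rfloor> = int d" using z01 unfolding z_def by (intro floor_unique) auto
  then have "dig y = d" "sig y = z" unfolding dig_def sig_def z_def by simp_all
  then show ?thesis using d unfolding z_def by simp
qed

lemma approx_dig:
  "\<forall>y. 0 \<le> y \<longrightarrow> y < 1 \<longrightarrow> (\<forall>k<n. dig (orb y k) \<in> D) \<longrightarrow> (\<exists>z\<in>C0. \<bar>y - z\<bar> \<le> 1 / real N ^ n)"
proof (induction n)
  case 0
  show ?case
  proof (intro allI impI)
    fix y :: real assume y: "0 \<le> y" "y < 1"
    obtain z where z: "z \<in> C0" using C0_ne by blast
    then have "0 \<le> z \<and> z \<le> 1" using C0_sub by auto
    then show "\<exists>z\<in>C0. \<bar>y - z\<bar> \<le> 1 / real N ^ 0" using z y by (intro bexI[of _ z]) auto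
  qed
next
  case (Suc n)
  show ?case
  proof (intro allI impI)
    fix y :: real assume y: "0 \<le> y" "y < 1" and dg: "\<forall>k<Suc n. dig (orb y k) \<in> D"
    have d0: "dig y \<in> D" using dg by (metis orb_0 zero_less_Suc)
    have "\<forall>k<n. dig (orb (sig y) k) \<in> D"
    proof (intro allI impI)
      fix k assume "k < n"
      then have "dig (orb y (Suc k)) \<in> D" using dg by blast
      then show "dig (orb (sig y) k) \<in> D" using orb_sig[of y k] by simp
    qed
    then obtain z' where z': "z' \<in> C0" "\<bar>sig y - z'\<bar> \<le> 1 / real N ^ n"
      using Suc.IH sig_range by blast
    have mem: "cphi B (dig y) z' \<in> C0" using C0_fix z'(1) d0 by blast
    have e1: "\<bar>y - cphi B (dig y) z'\<bar> = \<bar>sig y - z'\<bar> / real N"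
    proof -
      have "y - cphi B (dig y) z' = (sig y - z') / real N"
        unfolding sig_eq[OF y(1)] cphi_def using N_pos by (simp add: field_simps)
      then show ?thesis using N_pos by (simp add: abs_divide)
    qed
    have e2: "\<bar>sig y - z'\<bar> / real N \<le> 1 / real N ^ n / real N"
      using z'(2) N_pos by (intro divide_right_mono) auto
    have e3: "1 / real N ^ n / real N = 1 / real N ^ Suc n"
      by (simp add: divide_divide_eq_left mult.commute)
    have "\<bar>y - cphi B (dig y) z'\<bar> \<le> 1 / real N ^ Suc n" using e1 e2 e3 by (metis order.trans order.refl)
    then show "\<exists>z\<in>C0. \<bar>y - z\<bar> \<le> 1 / real N ^ Suc n" using mem by blast
  qed
qed

lemma digits_in_C:
  assumes y: "0 \<le> y" "y < 1" and dg: "\<forall>k. dig (orb y k) \<in> D"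
  shows "y \<in> C0"
proof -
  have "\<forall>e>0. \<exists>z\<in>C0. dist z y < e"
  proof (intro allI impI)
    fix e :: real assume e: "e > 0"
    have "real N > 1" using N_ge by linarith
    then have "1 / real N < 1" by (auto simp: divide_less_eq)
    then obtain n where n: "(1 / real N) ^ n < e" using real_arch_pow_inv e by blast
    obtain z where z: "z \<in> C0" "\<bar>y - z\<bar> \<le> 1 / real N ^ n" using approx_dig y dg by blast
    have "1 / real N ^ n = (1 / real N) ^ n" by (simp add: power_one_over)
    then show "\<exists>z\<in>C0. dist z y < e" using z n by (intro bexI[of _ z]) (auto simp: dist_real_def abs_minus_commute)
  qed
  then show ?thesis using closed_approachable C0_compact compact_imp_closed by blast
qed

lemma same_dig:
  assumes rng: "\<And>t. 0 \<le> u t \<and> u t < 1 \<and> 0 \<le> v t \<and> v t < 1"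
    and su: "\<And>t. u (Suc t) = sig (u t)" and sv: "\<And>t. v (Suc t) = sig (v t)"
    and dd: "\<And>t. dig (u t) = dig (v t)"
  shows "u 0 = v 0"
proof -
  have diff: "u t - v t = real N ^ t * (u 0 - v 0)" for t
  proof (induction t)
    case (Suc t)
    have a: "u (Suc t) = real N * u t - real (dig (u t))" using su[of t] sig_eq[of "u t"] rng[of t] by simp
    have b: "v (Suc t) = real N * v t - real (dig (v t))" using sv[of t] sig_eq[of "v t"] rng[of t] by simp
    have "u (Suc t) - v (Suc t) = real N * (u t - v t)"
      unfolding a b dd[of t] by (simp add: algebra_simps)
    then show ?case using Suc by simp
  qed simp
  have bnd: "\<bar>u 0 - v 0\<bar> \<le> (1 / real N) ^ t" for t
  proof -
    have "\<bar>u t - v t\<bar> \<le> 1" using rng[of t] by linarith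
    then have "real N ^ t * \<bar>u 0 - v 0\<bar> \<le> 1" using diff[of t] by (simp add: abs_mult)
    then show ?thesis using N_pos by (simp add: power_one_over field_simps)
  qed
  have "\<bar>u 0 - v 0\<bar> \<le> 0"
  proof (rule LIMSEQ_le_const[OF LIMSEQ_power_zero[of "1 / real N"]])
    have "real N > 1" using N_ge by linarith
    then show "norm (1 / real N) < 1" by (auto simp: divide_less_eq)
    show "\<exists>M. \<forall>n\<ge>M. \<bar>u 0 - v 0\<bar> \<le> (1 / real N) ^ n" using bnd by blast
  qed
  then show ?thesis by simp
qed

lemma orb_irr: "x \<notin> \<rat> \<Longrightarrow> orb x k \<notin> \<rat>"
  by (induction k) (auto simp: sig_irr)

lemma orb_shift: "\<exists>z::int. orb x (i + p) = real N ^ p * orb x i - of_int z"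
proof (induction p)
  case 0
  show ?case by (intro exI[of _ 0]) simp
next
  case (Suc p)
  then obtain z where z: "orb x (i + p) = real N ^ p * orb x i - of_int z" by blast
  have "orb x (i + Suc p) = real N * orb x (i + p) - of_int \<lfloor>real N * orb x (i + p)\<rfloor>"
    by (simp add: sig_def)
  also have "\<dots> = real N ^ Suc p * orb x i - of_int (int N * z + \<lfloor>real N * orb x (i + p)\<rfloor>)"
    unfolding z by (simp add: algebra_simps)
  finally show ?case by blast
qed

lemma no_cycle:
  assumes x: "x \<notin> \<rat>" and ij: "i < j" and eq: "orb x i = orb x j"
  shows False
proof -
  define p where "p = j - i"
  have j: "j = i + p" "p > 0" using ij unfolding p_def by auto
  obtain z where z: "orb x (i + p) = real N ^ p * orb x i - of_int z" using orb_shift by blast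
  have "real N ^ p > 1" using N_ge j(2) by (intro one_less_power) auto
  moreover have "orb x i * (real N ^ p - 1) = of_int z" using z eq j(1) by (simp add: algebra_simps)
  ultimately have "orb x i = of_int z / (real N ^ p - 1)" by (simp add: field_simps)
  moreover have "of_int z / (real N ^ p - 1) \<in> \<rat>" by (intro Rats_divide Rats_diff) auto
  ultimately show False using orb_irr[OF x, of i] by simp
qed

lemma no_repeat:
  assumes x: "x \<notin> \<rat>" "0 \<le> x" "x < 1" and dd: "\<And>t. dig (orb x (i + t)) = dig (orb x (j + t))"
  shows "i = j"
proof -
  have "orb x (i + 0) = orb x (j + 0)"
  proof (rule same_dig[where u="\<lambda>t. orb x (i + t)" and v="\<lambda>t. orb x (j + t)"])
    show "\<And>t. 0 \<le> orb x (i + t) \<and> orb x (i + t) < 1 \<and> 0 \<le> orb x (j + t) \<and> orb x (j + t) < 1"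
      using orb_props[OF x] by blast
  qed (simp_all add: dd)
  then have "orb x i = orb x j" by simp
  then show ?thesis using no_cycle[OF x(1)] by (metis linorder_neqE_nat)
qed

end


context cantor_ctx
begin

lemma fwd:
  assumes x: "x \<notin> \<rat>" "0 \<le> x" "x < 1" and xC: "x \<in> C0"
  shows "F x \<notin> \<rat>"
proof
  assume Fq: "F x \<in> \<rat>"
  define v where "v k = F (orb x k)" for k
  define a where "a k = dig (orb x k)" for k
  note op = orb_props[OF x]
  have inC: "orb x k \<in> C0 \<and> a k \<in> D" for k
  proof (induction k)
    case 0
    show ?case using CM1[OF xC x(1)] xC unfolding a_def by simp
  next
    case (Suc k)
    then have "sig (orb x k) \<in> C0" using CM1 op by blast
    then show ?case using CM1 op[of "Suc k"] unfolding a_def by simp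
  qed
  have rec: "real m * v k = real (r (a k)) + v (Suc k)" for k
    using F_step[of "orb x k"] op[of k] inC[of k] unfolding v_def a_def by simp
  have v01: "0 \<le> v k \<and> v k \<le> 1" for k unfolding v_def using F01 by simp
  have const_r: False if c: "\<And>t. r (a (k + t)) = c" for k c
  proof -
    have "a (k + t) = a (Suc k + t)" for t
      using r_inj[of "a (k + t)" "a (Suc k + t)"] inC c[of t] c[of "Suc t"] by simp
    then have "k = Suc k" using no_repeat[OF x, of k "Suc k"] unfolding a_def by blast
    then show False by simp
  qed
  have vpos: "0 < v k \<and> v k < 1" for k
  proof -
    have n0: "v k \<noteq> 0"
    proof
      assume v0: "v k = 0"
      have vt: "v (k + t) = 0" for t
      proof (induction t)
        case (Suc t)
        then show ?case using rec[of "k + t"] v01[of "Suc (k + t)"] by simp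
      qed (simp add: v0)
      have "r (a (k + t)) = 0" for t using rec[of "k + t"] vt[of t] vt[of "Suc t"] by simp
      then show False using const_r by blast
    qed
    have n1: "v k \<noteq> 1"
    proof
      assume v1: "v k = 1"
      have vt: "v (k + t) = 1" for t
      proof (induction t)
        case (Suc t)
        have "r (a (k + t)) + 1 \<le> m" using r_le inC by blast
        then have "real (r (a (k + t))) + 1 \<le> real m" by linarith
        then show ?case using rec[of "k + t"] v01[of "Suc (k + t)"] Suc by simp
      qed (simp add: v1)
      have "real (r (a (k + t))) = real m - 1" for t using rec[of "k + t"] vt[of t] vt[of "Suc t"] by simp
      then have "r (a (k + t)) = m - 1" for t by (metis of_nat_1 of_nat_diff of_nat_eq_iff m_ge le_trans one_le_numeral)
      then show False using const_r by blast
    qed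
    show ?thesis using n0 n1 v01[of k] by simp
  qed
  have rfloor: "int (r (a k)) = \<lfloor>real m * v k\<rfloor>" for k
    using rec[of k] vpos[of "Suc k"] by (intro floor_unique[symmetric]) auto
  have key: "i = j" if vij: "v i = v j" for i j
  proof -
    have "v (i + t) = v (j + t)" for t
    proof (induction t)
      case (Suc t)
      have "v (Suc (i + t)) = real m * v (i + t) - real (r (a (i + t)))" using rec[of "i + t"] by simp
      also have "real (r (a (i + t))) = real (r (a (j + t)))" using rfloor[of "i + t"] rfloor[of "j + t"] Suc by simp
      also have "real m * v (i + t) - real (r (a (j + t))) = v (Suc (j + t))" using rec[of "j + t"] Suc by simp
      finally show ?case by simp
    qed (simp add: vij)
    then have "r (a (i + t)) = r (a (j + t))" for t using rfloor[of "i + t"] rfloor[of "j + t"] by simp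
    then have "a (i + t) = a (j + t)" for t using r_inj inC by blast
    then show "i = j" using no_repeat[OF x, of i j] unfolding a_def by blast
  qed
  obtain p q where pq: "q > 0" "F x = of_int p / of_int q" using Rats_cases'[OF Fq] by blast
  have qint: "\<exists>z::int. of_int q * v k = of_int z" for k
  proof (induction k)
    case 0
    show ?case using pq unfolding v_def by (intro exI[of _ p]) simp
  next
    case (Suc k)
    then obtain z where z: "of_int q * v k = of_int z" by blast
    have "of_int q * v (Suc k) = real m * (of_int q * v k) - of_int q * real (r (a k))"
      using rec[of k] by (simp add: algebra_simps)
    also have "\<dots> = of_int (int m * z - q * int (r (a k)))" unfolding z by simp
    finally show ?case by blast
  qed
  define w where "w k = \<lfloor>of_int q * v k\<rfloor>" for k
  have wq: "of_int (w k) = of_int q * v k" for k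
    using qint[of k] unfolding w_def by auto
  have "range w \<subseteq> {0..q}"
  proof
    fix z assume "z \<in> range w"
    then obtain k where k: "z = w k" by blast
    have "0 \<le> of_int q * v k" "of_int q * v k \<le> of_int q * 1"
      using vpos[of k] pq(1) by (auto intro: mult_left_mono)
    then have "(0::real) \<le> of_int z" "of_int z \<le> (of_int q :: real)" using wq[of k] k by simp_all
    then show "z \<in> {0..q}" by simp
  qed
  then have "finite (range w)" using finite_subset by blast
  then have "\<not> inj w" using finite_imageD[of w UNIV] by auto
  then obtain i j where ij: "i \<noteq> j" "w i = w j" unfolding inj_def by blast
  then have "of_int q * v i = of_int q * v j" using wq by metis
  then have "v i = v j" using pq(1) by simp
  then show False using key ij(1) by blast
qed

lemma bwd:
  assumes x: "x \<notin> \<rat>" "0 \<le> x" "x < 1" and xC: "x \<notin> C0"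
  shows "F x \<in> \<rat>"
proof -
  note op = orb_props[OF x]
  obtain k where k: "dig (orb x k) \<notin> D" using digits_in_C x xC by blast
  have "F (orb x (k - t)) \<in> \<rat>" if "t \<le> k" for t
    using that
  proof (induction t)
    case 0
    have "real m * F (orb x k) = real (r (dig (orb x k)))" using F_step[of "orb x k"] op[of k] k by simp
    then have "F (orb x k) = real (r (dig (orb x k))) / real m" using m_pos by (simp add: field_simps)
    then show ?case by simp
  next
    case (Suc t)
    define j where "j = k - Suc t"
    have sj: "Suc j = k - t" using Suc.prems unfolding j_def by simp
    have IH: "F (orb x (Suc j)) \<in> \<rat>" using Suc sj by simp
    have "real m * F (orb x j) = real (r (dig (orb x j))) + (if dig (orb x j) \<in> D then F (orb x (Suc j)) else 0)"
      using F_step[of "orb x j"] op[of j] by simp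
    then have "F (orb x j) = (real (r (dig (orb x j))) + (if dig (orb x j) \<in> D then F (orb x (Suc j)) else 0)) / real m"
      using m_pos by (simp add: field_simps)
    moreover have "(real (r (dig (orb x j))) + (if dig (orb x j) \<in> D then F (orb x (Suc j)) else 0)) / real m \<in> \<rat>"
      using IH by (intro Rats_divide Rats_add) auto
    ultimately show ?case unfolding j_def by simp
  qed
  from this[of k] show ?thesis by simp
qed

lemma main:
  assumes "x \<in> {0..1}" and "x \<notin> \<rat>"
  shows "x \<in> cantor_set B \<longleftrightarrow> cantor_cdf B x \<notin> \<rat>"
proof -
  have x: "x \<notin> \<rat>" "0 \<le> x" "x < 1"
  proof -
    show "x \<notin> \<rat>" "0 \<le> x" using assms by auto
    have "x \<noteq> 1" using assms(2) by auto
    then show "x < 1" using assms(1) by auto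
  qed
  show ?thesis unfolding cantor_set_eq cantor_cdf_eq[OF x(2)] using fwd[OF x] bwd[OF x] by blast
qed

end

theorem lemma2p7:
  fixes B :: "nat list" and x :: real
  assumes "cantor_vec B"
    and "x \<in> {0..1}" and "x \<notin> \<rat>"
  shows "x \<in> cantor_set B \<longleftrightarrow> cantor_cdf B x \<notin> \<rat>"
  using cantor_ctx.main[OF cantor_ctx.intro[OF assms(1)] assms(2,3)] .


end
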